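(* Let $\Xi\in\mathcal C$ and write $\Xi=X^\dagger X$ with $X\in\mathcal B(\mathcal H)$. Then $\Xi$ is an extremal point of $\mathcal C$ if and only if $$\mathcal B(\operatorname{Rng}(X))=\operatorname{Span}\Big\{X\Big[\textstyle\bigoplus_{k\in S}(I_{\mathcal H_k}\otimes M_k)\Big]X^\dagger:\ M_k\in\mathcal B(\mathbb C^{m_k})\ \forall k\Big\},$$ where $\mathcal B(\operatorname{Rng}(X))$ is identified with the operators on $\mathcal H$ whose support and range lie in $\operatorname{Rng}(X)$.
   Context: Let $G$ be a group with a unitary representation $g\mapsto U_g$ on a finite-dimensional Hilbert space $\mathcal H$, decomposed as $\mathcal H=\bigoplus_{k\in S}(\mathcal H_k\otimes\mathbb C^{m_k})$, where $S$ is the set of equivalence classes of irreducible components, $\mathcal H_k$ carries the irreducible representation of class $k$ and $m_k$ is its multiplicity, so that $U_g=\bigoplus_k U^{(k)}_g\otimes I_{m_k}$. Let $d_{\mathcal H_k}=\dim\mathcal H_k$, let $P_k$ be the orthogonal projector onto $\mathcal H_k\otimes\mathbb C^{m_k}$, and let $\operatorname{Tr}_{\mathcal H_k}$ be the partial trace $\mathcal B(\mathcal H_k\otimes\mathbb C^{m_k})\to\mathcal B(\mathbb C^{m_k})$. Let $\mathcal C$ be the convex set of operators $\Xi\ge0$ on $\mathcal H$ with $\operatorname{Tr}_{\mathcal H_k}(P_k\Xi P_k)=d_{\mathcal H_k}I_{m_k}$ for all $k\in S$ (the seeds of covariant POVMs $dP_g=U_g^\dagger\Xi U_g\,dg$).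 *)

theory Defs
  imports Complex_Main
begin

text \<open>Concrete model of the decomposition
  H = (direct sum over k in S) H_k (tensor) C^(m k), with dim H_k = d k.
  An orthonormal basis of H is indexed by triples (k, a, j) with k in S,
  a < d k (basis index of H_k) and j < m k (multiplicity index).\<close>

type_synonym idx = "nat \<times> nat \<times> nat"
type_synonym vec = "idx \<Rightarrow> complex"
type_synonym op = "idx \<Rightarrow> idx \<Rightarrow> complex"

definition Idx :: "nat set \<Rightarrow> (nat \<Rightarrow> nat) \<Rightarrow> (nat \<Rightarrow> nat) \<Rightarrow> idx set" where
  "Idx S d m = {(k, a, j). k \<in> S \<and> a < d k \<and> j < m k}"

definition vecs :: "nat set \<Rightarrow> (nat \<Rightarrow> nat) \<Rightarrow> (nat \<Rightarrow> nat) \<Rightarrow> vec set" where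
  "vecs S d m = {v. \<forall>x. x \<notin> Idx S d m \<longrightarrow> v x = 0}"

definition ops :: "nat set \<Rightarrow> (nat \<Rightarrow> nat) \<Rightarrow> (nat \<Rightarrow> nat) \<Rightarrow> op set" where
  "ops S d m = {A. \<forall>x y. x \<notin> Idx S d m \<or> y \<notin> Idx S d m \<longrightarrow> A x y = 0}"

definition op_mult :: "nat set \<Rightarrow> (nat \<Rightarrow> nat) \<Rightarrow> (nat \<Rightarrow> nat) \<Rightarrow> op \<Rightarrow> op \<Rightarrow> op" where
  "op_mult S d m A B = (\<lambda>x y. \<Sum>z\<in>Idx S d m. A x z * B z y)"

definition op_apply :: "nat set \<Rightarrow> (nat \<Rightarrow> nat) \<Rightarrow> (nat \<Rightarrow> nat) \<Rightarrow> op \<Rightarrow> vec \<Rightarrow> vec" where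
  "op_apply S d m A v = (\<lambda>x. \<Sum>y\<in>Idx S d m. A x y * v y)"

definition inner_H :: "nat set \<Rightarrow> (nat \<Rightarrow> nat) \<Rightarrow> (nat \<Rightarrow> nat) \<Rightarrow> vec \<Rightarrow> vec \<Rightarrow> complex" where
  "inner_H S d m v w = (\<Sum>x\<in>Idx S d m. cnj (v x) * w x)"

definition adj :: "op \<Rightarrow> op" where
  "adj A = (\<lambda>x y. cnj (A y x))"

definition psd :: "nat set \<Rightarrow> (nat \<Rightarrow> nat) \<Rightarrow> (nat \<Rightarrow> nat) \<Rightarrow> op \<Rightarrow> bool" where
  "psd S d m A \<longleftrightarrow> A \<in> ops S d m \<and>
     (\<forall>v\<in>vecs S d m. Im (inner_H S d m v (op_apply S d m A v)) = 0
                      \<and> Re (inner_H S d m v (op_apply S d m A v)) \<ge> 0)"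

text \<open>The convex set C of seeds:
  Xi \<ge> 0 and Tr_{H_k}(P_k Xi P_k) = d_k I_{m_k} for all k in S.\<close>
definition seedC :: "nat set \<Rightarrow> (nat \<Rightarrow> nat) \<Rightarrow> (nat \<Rightarrow> nat) \<Rightarrow> op set" where
  "seedC S d m = {Xi. psd S d m Xi \<and>
     (\<forall>k\<in>S. \<forall>j<m k. \<forall>j'<m k.
        (\<Sum>a<d k. Xi (k, a, j) (k, a, j')) = (if j = j' then of_nat (d k) else 0))}"

definition extremal_point :: "op set \<Rightarrow> op \<Rightarrow> bool" where
  "extremal_point K Xi \<longleftrightarrow> Xi \<in> K \<and>
     (\<forall>A\<in>K. \<forall>B\<in>K. \<forall>t::real. 0 < t \<and> t < 1 \<and>
        Xi = (\<lambda>x y. complex_of_real t * A x y + complex_of_real (1 - t) * B x y)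
        \<longrightarrow> A = B)"

text \<open>Range of X and B(Rng X): operators on H whose range lies in Rng X and
  whose support (orthogonal complement of the kernel) lies in Rng X,
  i.e. which vanish on the orthogonal complement of Rng X.\<close>
definition Rng :: "nat set \<Rightarrow> (nat \<Rightarrow> nat) \<Rightarrow> (nat \<Rightarrow> nat) \<Rightarrow> op \<Rightarrow> vec set" where
  "Rng S d m X = op_apply S d m X ` vecs S d m"

definition ops_on_range :: "nat set \<Rightarrow> (nat \<Rightarrow> nat) \<Rightarrow> (nat \<Rightarrow> nat) \<Rightarrow> op \<Rightarrow> op set" where
  "ops_on_range S d m X = {A \<in> ops S d m.
     (\<forall>v\<in>vecs S d m. op_apply S d m A v \<in> Rng S d m X) \<and>
     (\<forall>v\<in>vecs S d m. (\<forall>w\<in>Rng S d m X. inner_H S d m w v = 0)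
                      \<longrightarrow> op_apply S d m A v = (\<lambda>_. 0))}"

text \<open>Block operator (direct sum over k) of I_{H_k} \<otimes> M_k, where M k is an
  m_k x m_k matrix with entries M k j j'.\<close>
definition blockop :: "nat set \<Rightarrow> (nat \<Rightarrow> nat) \<Rightarrow> (nat \<Rightarrow> nat)
    \<Rightarrow> (nat \<Rightarrow> nat \<Rightarrow> nat \<Rightarrow> complex) \<Rightarrow> op" where
  "blockop S d m M = (\<lambda>(k, a, j) (k', a', j').
     if (k, a, j) \<in> Idx S d m \<and> (k', a', j') \<in> Idx S d m \<and> k = k' \<and> a = a'
     then M k j j' else 0)"

definition op_span :: "op set \<Rightarrow> op set" where
  "op_span T = {A. \<exists>n (c :: nat \<Rightarrow> complex) (B :: nat \<Rightarrow> op).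
      (\<forall>i<n. B i \<in> T) \<and> A = (\<lambda>x y. \<Sum>i<n. c i * B i x y)}"

end

theory Submission
  imports Defs
begin


definition ip :: "'a set \<Rightarrow> ('a \<Rightarrow> complex) \<Rightarrow> ('a \<Rightarrow> complex) \<Rightarrow> complex" where
  "ip I u v = (\<Sum>x\<in>I. cnj (u x) * v x)"

lemma ip_diff_r: "ip I u (\<lambda>x. a x - b x) = ip I u a - ip I u b"
  unfolding ip_def by (simp add: right_diff_distrib sum_subtractf)

lemma ip_scale_r: "ip I u (\<lambda>x. c * a x) = c * ip I u a"
  unfolding ip_def by (simp add: sum_distrib_left mult.left_commute)

lemma ip_add_l: "ip I (\<lambda>x. a x + b x) r = ip I a r + ip I b r"
  unfolding ip_def by (simp add: distrib_right sum.distrib)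

lemma ip_sum_l: "ip I (\<lambda>x. \<Sum>l\<in>J. a l * G l x) r = (\<Sum>l\<in>J. cnj (a l) * ip I (G l) r)"
  unfolding ip_def cnj_sum
  by (simp add: sum_distrib_left sum_distrib_right mult.assoc sum.swap[of _ I])

lemma ip_zero_l: "(\<forall>x\<in>I. a x = 0) \<Longrightarrow> ip I a r = 0"
  unfolding ip_def by simp

lemma ip_self: "ip I u u = of_real (\<Sum>x\<in>I. (cmod (u x))\<^sup>2)"
proof -
  have "ip I u u = (\<Sum>x\<in>I. of_real ((cmod (u x))\<^sup>2))"
    unfolding ip_def by (intro sum.cong refl) (simp only: complex_norm_square mult.commute)
  also have "\<dots> = of_real (\<Sum>x\<in>I. (cmod (u x))\<^sup>2)" by (simp only: of_real_sum)
  finally show ?thesis .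
qed

lemma ip_self_zero: "finite I \<Longrightarrow> ip I u u = 0 \<Longrightarrow> \<forall>x\<in>I. u x = 0"
proof -
  assume f: "finite I" and z: "ip I u u = 0"
  hence "(\<Sum>x\<in>I. (cmod (u x))\<^sup>2) = 0" unfolding ip_self by (simp only: of_real_eq_0_iff)
  hence "\<forall>x\<in>I. (cmod (u x))\<^sup>2 = 0" using f by (subst (asm) sum_nonneg_eq_0_iff) auto
  thus ?thesis by simp
qed

lemma GS:
  assumes fI: "finite I" and fJ: "finite J"
  shows "\<exists>c. \<forall>A. \<forall>i\<in>J. ip I (G i) (\<lambda>x. A x - (\<Sum>l\<in>J. c A l * G l x)) = 0"
  using fJ
proof (induction J rule: finite_induct)
  case empty
  show ?case by simp
next
  case (insert j J)
  obtain c0 where c0: "\<forall>A. \<forall>i\<in>J. ip I (G i) (\<lambda>x. A x - (\<Sum>l\<in>J. c0 A l * G l x)) = 0"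
    using insert.IH by blast
  define P0 where "P0 A = (\<lambda>x. \<Sum>l\<in>J. c0 A l * G l x)" for A
  define u where "u = (\<lambda>x. G j x - P0 (G j) x)"
  have orthP0: "ip I (P0 B) r = 0" if "\<forall>i\<in>J. ip I (G i) r = 0" for B r
    unfolding P0_def ip_sum_l using that by simp
  have c0': "\<forall>i\<in>J. ip I (G i) (\<lambda>x. A x - P0 A x) = 0" for A
    using c0 unfolding P0_def by blast
  have uJ: "\<forall>i\<in>J. ip I (G i) u = 0"
    using c0'[of "G j"] unfolding u_def by simp
  have Gj: "G j = (\<lambda>x. u x + P0 (G j) x)" unfolding u_def by simp
  show ?case
  proof (cases "ip I u u = 0")
    case True
    have u0: "\<forall>x\<in>I. u x = 0" using ip_self_zero[OF fI True] .
    define c where "c A l = (if l = j then 0 else c0 A l)" for A l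
    have sum_eq: "(\<Sum>l\<in>insert j J. c A l * G l x) = P0 A x" for A x
    proof -
      have "(\<Sum>l\<in>insert j J. c A l * G l x) = (\<Sum>l\<in>J. c A l * G l x)"
        using insert.hyps by (simp add: c_def)
      also have "\<dots> = P0 A x" unfolding P0_def c_def
        using insert.hyps by (intro sum.cong) auto
      finally show ?thesis .
    qed
    have "\<forall>i\<in>insert j J. ip I (G i) (\<lambda>x. A x - (\<Sum>l\<in>insert j J. c A l * G l x)) = 0" for A
    proof -
      have r: "\<forall>i\<in>J. ip I (G i) (\<lambda>x. A x - P0 A x) = 0" using c0' by blast
      have "ip I (G j) (\<lambda>x. A x - P0 A x) = 0"
        apply (subst Gj) apply (subst ip_add_l)
        using ip_zero_l[OF u0] orthP0[OF r] by simp
      thus ?thesis using r unfolding sum_eq by simp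
    qed
    thus ?thesis by blast
  next
    case False
    define al where "al A = ip I u (\<lambda>x. A x - P0 A x) / ip I u u" for A
    define c where "c A l = (if l = j then al A else c0 A l - al A * c0 (G j) l)" for A l
    have sum_eq: "(\<Sum>l\<in>insert j J. c A l * G l x) = P0 A x + al A * u x" for A x
    proof -
      have "(\<Sum>l\<in>insert j J. c A l * G l x) = al A * G j x + (\<Sum>l\<in>J. c A l * G l x)"
        using insert.hyps by (simp add: c_def)
      also have "(\<Sum>l\<in>J. c A l * G l x) = (\<Sum>l\<in>J. c0 A l * G l x - al A * (c0 (G j) l * G l x))"
        unfolding c_def using insert.hyps by (intro sum.cong) (auto simp: algebra_simps)
      also have "\<dots> = P0 A x - al A * P0 (G j) x"
        unfolding P0_def by (simp add: sum_subtractf sum_distrib_left)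
      finally show ?thesis unfolding u_def by (simp add: algebra_simps)
    qed
    have "\<forall>i\<in>insert j J. ip I (G i) (\<lambda>x. A x - (\<Sum>l\<in>insert j J. c A l * G l x)) = 0" for A
    proof -
      have e: "(\<lambda>x. A x - (\<Sum>l\<in>insert j J. c A l * G l x)) = (\<lambda>x. (A x - P0 A x) - al A * u x)"
        unfolding sum_eq by (simp add: algebra_simps)
      have r: "\<forall>i\<in>J. ip I (G i) (\<lambda>x. (A x - P0 A x) - al A * u x) = 0"
        using c0'[of A] uJ by (simp add: ip_diff_r ip_scale_r)
      have "ip I u (\<lambda>x. (A x - P0 A x) - al A * u x) = ip I u (\<lambda>x. A x - P0 A x) - al A * ip I u u"
        by (simp only: ip_diff_r ip_scale_r)
      also have "\<dots> = 0" using False by (simp add: al_def)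
      finally have "ip I u (\<lambda>x. (A x - P0 A x) - al A * u x) = 0" .
      hence "ip I (G j) (\<lambda>x. (A x - P0 A x) - al A * u x) = 0"
        apply (subst Gj) apply (subst ip_add_l)
        using orthP0[OF r] by simp
      thus ?thesis using r unfolding e by simp
    qed
    thus ?thesis by blast
  qed
qed



lemma sum_delta_r: "finite A \<Longrightarrow> (\<Sum>z\<in>A. f z * (if z = y then 1 else 0)) = (if y \<in> A then f y else (0::'b::comm_ring_1))"
proof -
  assume "finite A"
  have e: "(\<lambda>z. f z * (if z = y then 1 else 0)) = (\<lambda>z. if z = y then f z else 0)" by auto
  show ?thesis unfolding e using \<open>finite A\<close> by (simp add: sum.delta')
qed

lemma sum_delta_l: "finite A \<Longrightarrow> (\<Sum>z\<in>A. (if z = y then 1 else 0) * f z) = (if y \<in> A then f y else (0::'b::comm_ring_1))"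
  using sum_delta_r[of A f y] by (simp add: mult.commute)

lemma sum_delta_r': "finite A \<Longrightarrow> (\<Sum>z\<in>A. f z * (if y = z then 1 else 0)) = (if y \<in> A then f y else (0::'b::comm_ring_1))"
  using sum_delta_r[of A f y] by (simp add: eq_commute)

lemma sum_delta_l': "finite A \<Longrightarrow> (\<Sum>z\<in>A. (if y = z then 1 else 0) * f z) = (if y \<in> A then f y else (0::'b::comm_ring_1))"
  using sum_delta_l[of A y f] by (simp add: eq_commute)

locale L = fixes S :: "nat set" and d m :: "nat \<Rightarrow> nat" assumes finS: "finite S"
begin
abbreviation "I \<equiv> Idx S d m"
abbreviation "mul \<equiv> op_mult S d m"
abbreviation "app \<equiv> op_apply S d m"
abbreviation "inn \<equiv> inner_H S d m"
abbreviation "OPS \<equiv> ops S d m"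
abbreviation "VECS \<equiv> vecs S d m"

definition idop :: op where "idop = (\<lambda>x y. if x = y \<and> x \<in> I then 1 else 0)"
definition tr :: "op \<Rightarrow> complex" where "tr A = (\<Sum>x\<in>I. A x x)"
definition unitv :: "idx \<Rightarrow> vec" where "unitv y = (\<lambda>x. if x = y then 1 else 0)"

lemma finI: "finite I"
proof -
  have "I = Sigma S (\<lambda>k. Sigma {..<d k} (\<lambda>_. {..<m k}))"
    unfolding Idx_def by auto
  thus ?thesis using finS by auto
qed

lemma sum_Idx: "sum f I = (\<Sum>k\<in>S. \<Sum>a<d k. \<Sum>j<m k. f (k,a,j))"
proof -
  have "I = Sigma S (\<lambda>k. Sigma {..<d k} (\<lambda>_. {..<m k}))"
    unfolding Idx_def by auto
  thus ?thesis using finS by (simp add: sum.Sigma)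
qed

lemma opsD: "A \<in> OPS \<Longrightarrow> x \<notin> I \<or> y \<notin> I \<Longrightarrow> A x y = 0"
  unfolding ops_def by blast

lemma vecsD: "v \<in> VECS \<Longrightarrow> x \<notin> I \<Longrightarrow> v x = 0"
  unfolding vecs_def by blast

lemma ops_eqI: "A \<in> OPS \<Longrightarrow> B \<in> OPS \<Longrightarrow> (\<And>x y. x \<in> I \<Longrightarrow> y \<in> I \<Longrightarrow> A x y = B x y) \<Longrightarrow> A = B"
proof (intro ext)
  fix x y assume a: "A \<in> OPS" "B \<in> OPS" "\<And>x y. x \<in> I \<Longrightarrow> y \<in> I \<Longrightarrow> A x y = B x y"
  show "A x y = B x y"
  proof (cases "x \<in> I \<and> y \<in> I")
    case True thus ?thesis using a(3) by simp
  next
    case False 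
    hence "A x y = 0" "B x y = 0" using opsD[OF a(1)] opsD[OF a(2)] by simp_all
    thus ?thesis by simp
  qed
qed

lemma vecs_eqI: "u \<in> VECS \<Longrightarrow> v \<in> VECS \<Longrightarrow> (\<And>x. x \<in> I \<Longrightarrow> u x = v x) \<Longrightarrow> u = v"
proof (intro ext)
  fix x assume a: "u \<in> VECS" "v \<in> VECS" "\<And>x. x \<in> I \<Longrightarrow> u x = v x"
  show "u x = v x"
  proof (cases "x \<in> I")
    case True thus ?thesis using a(3) by simp
  next
    case False thus ?thesis using vecsD[OF a(1)] vecsD[OF a(2)] by simp
  qed
qed

lemma mul_ops: "A \<in> OPS \<Longrightarrow> B \<in> OPS \<Longrightarrow> mul A B \<in> OPS"
  unfolding op_mult_def by (subst ops_def) (auto simp: opsD)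

lemma adj_ops: "A \<in> OPS \<Longrightarrow> adj A \<in> OPS"
  unfolding ops_def adj_def by auto

lemma adj_adj[simp]: "adj (adj A) = A"
  unfolding adj_def by simp

lemma app_vecs: "A \<in> OPS \<Longrightarrow> app A v \<in> VECS"
  unfolding op_apply_def by (subst vecs_def) (auto simp: opsD)

lemma mul_assoc: "mul (mul A B) C = mul A (mul B C)"
  unfolding op_mult_def
  apply (intro ext)
  apply (simp add: sum_distrib_left sum_distrib_right mult.assoc)
  apply (rule sum.swap)
  done

lemma adj_mul: "adj (mul A B) = mul (adj B) (adj A)"
  unfolding op_mult_def adj_def by (intro ext) (simp add: mult.commute)

lemma app_mul: "app (mul A B) v = app A (app B v)"
  unfolding op_mult_def op_apply_def
  apply (intro ext)
  apply (simp add: sum_distrib_left sum_distrib_right mult.assoc)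
  apply (rule sum.swap)
  done

lemma tr_comm: "tr (mul A B) = tr (mul B A)"
  unfolding tr_def op_mult_def
  apply (subst sum.swap)
  apply (simp add: mult.commute)
  done

lemma idop_ops: "idop \<in> OPS" unfolding idop_def ops_def by (simp del: split_paired_All)

lemma mul_idop: "A \<in> OPS \<Longrightarrow> mul A idop = A"
proof -
  assume a: "A \<in> OPS"
  have "(\<lambda>z. A x z * (if z = y \<and> z \<in> I then 1 else 0)) = (\<lambda>z. A x z * (if z = y then 1 else 0))" if "y \<in> I" for x y
    using that by auto
  hence "mul A idop x y = A x y" for x y
    unfolding op_mult_def idop_def using a by (cases "y \<in> I") (auto simp: opsD sum_delta_r finI)
  thus ?thesis by (intro ext)
qed

lemma idop_mul: "A \<in> OPS \<Longrightarrow> mul idop A = A"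
proof -
  assume a: "A \<in> OPS"
  have "(\<lambda>z. (if x = z \<and> x \<in> I then 1 else 0) * A z y) = (\<lambda>z. (if z = x then 1 else 0) * A z y)" if "x \<in> I" for x y
    using that by auto
  hence "mul idop A x y = A x y" for x y
    unfolding op_mult_def idop_def using a by (cases "x \<in> I") (auto simp: opsD sum_delta_l' finI)
  thus ?thesis by (intro ext)
qed

lemma unitv_vecs: "y \<in> I \<Longrightarrow> unitv y \<in> VECS"
  unfolding unitv_def by (subst vecs_def) auto

lemma app_unitv: "y \<in> I \<Longrightarrow> app A (unitv y) = (\<lambda>x. A x y)"
  unfolding op_apply_def unitv_def by (intro ext) (simp add: finI sum_delta_r)

lemma inner_adj: "inn u (app (adj A) w) = inn (app A u) w"
  unfolding inner_H_def op_apply_def adj_def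
  apply (simp add: sum_distrib_left sum_distrib_right mult.assoc mult.left_commute)
  apply (rule sum.swap)
  done

lemma inner_cnj: "inn u w = cnj (inn w u)"
  unfolding inner_H_def by (simp add: mult.commute)

lemma proj_exists:
  assumes Y: "Y \<in> OPS"
  shows "\<exists>W0\<in>OPS. mul Y (mul (adj Y) W0) = Y"
proof -
  define G where "G i = (\<lambda>y. cnj (Y i y))" for i
  obtain c where c: "\<forall>A. \<forall>i\<in>I. ip I (G i) (\<lambda>x. A x - (\<Sum>l\<in>I. c A l * G l x)) = 0"
    using GS[OF finI finI, of G] by blast
  define W0 where "W0 = (\<lambda>l y0. if l \<in> I \<and> y0 \<in> I then c (unitv y0) l else 0)"
  have W0: "W0 \<in> OPS" unfolding W0_def by (subst ops_def) auto
  have "mul Y (mul (adj Y) W0) x y0 = Y x y0" if x: "x \<in> I" and y0: "y0 \<in> I" for x y0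
  proof -
    define p where "p z = (\<Sum>l\<in>I. c (unitv y0) l * G l z)" for z
    have pz: "mul (adj Y) W0 z y0 = p z" for z
      unfolding op_mult_def adj_def W0_def p_def G_def using y0
      by (intro sum.cong refl) (simp add: mult.commute)
    have orth: "ip I (G x) (\<lambda>z. unitv y0 z - p z) = 0" using c x unfolding p_def by blast
    hence "(\<Sum>z\<in>I. Y x z * (unitv y0 z - p z)) = 0" unfolding ip_def G_def by simp
    hence "(\<Sum>z\<in>I. Y x z * unitv y0 z) = (\<Sum>z\<in>I. Y x z * p z)"
      by (simp add: right_diff_distrib sum_subtractf)
    moreover have "(\<Sum>z\<in>I. Y x z * unitv y0 z) = Y x y0"
      unfolding unitv_def using y0 by (simp add: sum_delta_r finI)
    ultimately show ?thesis unfolding op_mult_def[of S d m Y] pz by simp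
  qed
  hence "mul Y (mul (adj Y) W0) = Y"
    by (intro ops_eqI mul_ops adj_ops Y W0) auto
  thus ?thesis using W0 by blast
qed

lemma orth_adj_zero:
  assumes X: "X \<in> OPS" and v: "v \<in> VECS" and o: "\<forall>w\<in>Rng S d m X. inn w v = 0"
  shows "app (adj X) v = (\<lambda>_. 0)"
proof (rule vecs_eqI[OF app_vecs[OF adj_ops[OF X]]])
  show "(\<lambda>_. 0) \<in> VECS" by (simp add: vecs_def)
  fix x assume x: "x \<in> I"
  have "app X (unitv x) \<in> Rng S d m X" unfolding Rng_def using unitv_vecs[OF x] by blast
  hence "inn (app X (unitv x)) v = 0" using o by blast
  hence "inn (unitv x) (app (adj X) v) = 0" by (simp add: inner_adj)
  moreover have "inn (unitv x) (app (adj X) v) = app (adj X) v x"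
  proof -
    have e: "cnj (unitv x xa) = (if xa = x then 1 else 0)" for xa unfolding unitv_def by auto
    show ?thesis unfolding inner_H_def using x by (simp add: e sum_delta_l finI)
  qed
  ultimately show "app (adj X) v x = 0" by simp
qed

abbreviation "WW X \<equiv> ops_on_range S d m X"

lemma app_lincomb: "app (\<lambda>x y. \<Sum>i\<in>J. c i * B i x y) v = (\<lambda>x. \<Sum>i\<in>J. c i * app (B i) v x)"
  unfolding op_apply_def
  apply (intro ext)
  apply (simp add: sum_distrib_left sum_distrib_right mult.assoc)
  apply (rule sum.swap)
  done

lemma app_lin_r: "app X (\<lambda>y. \<Sum>i\<in>J. c i * u i y) = (\<lambda>x. \<Sum>i\<in>J. c i * app X (u i) x)"
  unfolding op_apply_def
  apply (intro ext)
  apply (simp add: sum_distrib_left sum_distrib_right mult.left_commute)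
  apply (rule sum.swap)
  done

lemma W_lincomb:
  assumes X: "X \<in> OPS" and fJ: "finite J" and B: "\<forall>i\<in>J. B i \<in> WW X"
  shows "(\<lambda>x y. \<Sum>i\<in>J. c i * B i x y) \<in> WW X"
proof -
  have Bo: "B i \<in> OPS" if "i \<in> J" for i using B that unfolding ops_on_range_def by blast
  have o: "(\<lambda>x y. \<Sum>i\<in>J. c i * B i x y) \<in> OPS"
    by (subst ops_def) (auto simp: opsD Bo)
  have r: "app (\<lambda>x y. \<Sum>i\<in>J. c i * B i x y) v \<in> Rng S d m X" if v: "v \<in> VECS" for v
  proof -
    have "\<forall>i\<in>J. \<exists>u\<in>VECS. app (B i) v = app X u"
      using B v unfolding ops_on_range_def Rng_def by blast
    then obtain u where u: "\<And>i. i \<in> J \<Longrightarrow> u i \<in> VECS \<and> app (B i) v = app X (u i)" by metis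
    have uv: "(\<lambda>y. \<Sum>i\<in>J. c i * u i y) \<in> VECS" using u by (subst vecs_def) (auto simp: vecsD)
    have "app (\<lambda>x y. \<Sum>i\<in>J. c i * B i x y) v = (\<lambda>x. \<Sum>i\<in>J. c i * app X (u i) x)"
      unfolding app_lincomb using u by (intro ext sum.cong refl) auto
    also have "\<dots> = app X (\<lambda>y. \<Sum>i\<in>J. c i * u i y)" by (simp add: app_lin_r)
    finally show ?thesis unfolding Rng_def using uv by blast
  qed
  have z: "app (\<lambda>x y. \<Sum>i\<in>J. c i * B i x y) v = (\<lambda>_. 0)"
    if v: "v \<in> VECS" and o: "\<forall>w\<in>Rng S d m X. inn w v = 0" for v
  proof -
    have "app (B i) v = (\<lambda>_. 0)" if "i \<in> J" for i
      using B that v o unfolding ops_on_range_def by blast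
    thus ?thesis unfolding app_lincomb by (intro ext) simp
  qed
  show ?thesis unfolding ops_on_range_def using o r z by blast
qed

lemma W_diff:
  assumes X: "X \<in> OPS" and A: "A \<in> WW X" and B: "B \<in> WW X"
  shows "(\<lambda>x y. A x y - B x y) \<in> WW X"
proof -
  have "(\<lambda>x y. \<Sum>i\<in>{0::nat,1}. (if i = 0 then 1 else -1) * (if i = 0 then A else B) x y) \<in> WW X"
    using A B by (intro W_lincomb X) auto
  thus ?thesis by simp
qed

lemma XFX_W:
  assumes X: "X \<in> OPS" and F: "F \<in> OPS"
  shows "mul (mul X F) (adj X) \<in> WW X"
proof -
  have o: "mul (mul X F) (adj X) \<in> OPS" by (intro mul_ops adj_ops X F)
  have r: "app (mul (mul X F) (adj X)) v \<in> Rng S d m X" if "v \<in> VECS" for v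
  proof -
    have "app (mul (mul X F) (adj X)) v = app X (app (mul F (adj X)) v)"
      by (simp add: mul_assoc app_mul)
    moreover have "app (mul F (adj X)) v \<in> VECS" by (intro app_vecs mul_ops adj_ops X F)
    ultimately show ?thesis unfolding Rng_def by blast
  qed
  have z: "app (mul (mul X F) (adj X)) v = (\<lambda>_. 0)"
    if v: "v \<in> VECS" and ov: "\<forall>w\<in>Rng S d m X. inn w v = 0" for v
  proof -
    have "app (adj X) v = (\<lambda>_. 0)" by (rule orth_adj_zero[OF X v ov])
    thus ?thesis unfolding app_mul[of "mul X F" "adj X"] by (simp add: op_apply_def)
  qed
  show ?thesis unfolding ops_on_range_def using o r z by blast
qed

lemma inn_unit: "x \<in> I \<Longrightarrow> inn (unitv x) w = w x"
proof -
  assume x: "x \<in> I"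
  have e: "cnj (unitv x xa) = (if xa = x then 1 else 0)" for xa unfolding unitv_def by auto
  show ?thesis unfolding inner_H_def using x by (simp add: e sum_delta_l finI)
qed

lemma app_lin2: "app A (\<lambda>z. a z + t * b z) = (\<lambda>z. app A a z + t * app A b z)"
  unfolding op_apply_def by (intro ext) (simp add: algebra_simps sum.distrib sum_distrib_left)

lemma inn_expand: "inn (\<lambda>z. a z + t * b z) (\<lambda>z. c z + t * e z)
  = inn a c + t * inn a e + cnj t * inn b c + cnj t * t * inn b e"
  unfolding inner_H_def by (simp add: algebra_simps sum.distrib sum_distrib_left)

lemma lin_vecs: "a \<in> VECS \<Longrightarrow> b \<in> VECS \<Longrightarrow> (\<lambda>z. a z + t * b z) \<in> VECS"
  by (subst vecs_def) (auto simp: vecsD)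

lemma quad:
  assumes x: "x \<in> I" and y: "y \<in> I"
  shows "inn (\<lambda>z. unitv x z + c * unitv y z) (app A (\<lambda>z. unitv x z + c * unitv y z))
    = A x x + c * A x y + cnj c * A y x + cnj c * c * A y y"
  unfolding app_lin2 inn_expand
  using x y by (simp add: inn_unit app_unitv)

lemma psd_herm:
  assumes p: "psd S d m A"
  shows "adj A = A"
proof -
  have Ao: "A \<in> OPS" using p unfolding psd_def by blast
  have im: "Im (inn v (app A v)) = 0" if "v \<in> VECS" for v using p that unfolding psd_def by blast
  have imq: "Im (A x x + c * A x y + cnj c * A y x + cnj c * c * A y y) = 0" if x: "x \<in> I" and y: "y \<in> I" for x y c
  proof -
    have "Im (inn (\<lambda>z. unitv x z + c * unitv y z) (app A (\<lambda>z. unitv x z + c * unitv y z))) = 0"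
      by (rule im[OF lin_vecs[OF unitv_vecs[OF x] unitv_vecs[OF y]]])
    thus ?thesis by (simp only: quad[OF x y])
  qed
  have "adj A x y = A x y" if x: "x \<in> I" and y: "y \<in> I" for x y
  proof -
    have "Im (A x x) = 0" using imq[OF x y, of 0] by simp
    moreover have "Im (A y y) = 0" using imq[OF y x, of 0] by simp
    moreover have "Im (A x x + A x y + A y x + A y y) = 0" using imq[OF x y, of 1] by simp
    moreover have "Im (A x x + \<i> * A x y - \<i> * A y x + A y y) = 0" using imq[OF x y, of "\<i>"] by simp
    ultimately have "Im (A y x) = - Im (A x y)" "Re (A y x) = Re (A x y)" by simp_all
    thus ?thesis unfolding adj_def by (intro complex_eqI) simp_all
  qed
  thus ?thesis by (intro ops_eqI adj_ops Ao) auto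
qed

lemma psd_null:
  assumes p: "psd S d m A" and v: "v \<in> VECS" and q0: "inn v (app A v) = 0"
  shows "app A v = (\<lambda>_. 0)"
proof -
  have Ao: "A \<in> OPS" using p unfolding psd_def by blast
  have h: "adj A = A" by (rule psd_herm[OF p])
  define w where "w = app A v"
  have w: "w \<in> VECS" unfolding w_def by (rule app_vecs[OF Ao])
  have re: "Re (inn u (app A u)) \<ge> 0" if "u \<in> VECS" for u using p that unfolding psd_def by blast
  define n where "n = inn w w"
  have n_re: "n = of_real (\<Sum>x\<in>I. (cmod (w x))\<^sup>2)"
    unfolding n_def inner_H_def using ip_self[of I w] unfolding ip_def .
  define N where "N = (\<Sum>x\<in>I. (cmod (w x))\<^sup>2)"
  have N0: "N \<ge> 0" unfolding N_def by (intro sum_nonneg) simp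
  have e1: "inn v (app A w) = n"
  proof -
    have "inn v (app A w) = inn v (app (adj A) w)" by (simp add: h)
    also have "\<dots> = inn (app A v) w" by (rule inner_adj)
    finally show ?thesis unfolding n_def w_def .
  qed
  have e2: "inn w (app A v) = n" unfolding n_def w_def ..
  define Q where "Q = Re (inn w (app A w))"
  have Q0: "Q \<ge> 0" unfolding Q_def using re[OF w] .
  have key: "2 * s * N + s * s * Q \<ge> 0" for s :: real
  proof -
    have "Re (inn (\<lambda>z. v z + of_real s * w z) (app A (\<lambda>z. v z + of_real s * w z))) \<ge> 0"
      by (intro re lin_vecs v w)
    moreover have "inn (\<lambda>z. v z + of_real s * w z) (app A (\<lambda>z. v z + of_real s * w z))
       = of_real s * n + of_real s * n + of_real s * of_real s * inn w (app A w)"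
      unfolding app_lin2 inn_expand e1 e2 q0 by simp
    ultimately show ?thesis unfolding n_re N_def[symmetric] Q_def by (simp add: mult_ac)
  qed
  have "N = 0"
  proof (rule ccontr)
    assume "N \<noteq> 0" hence Np: "N > 0" using N0 by simp
    define s where "s = - N / (Q + 1)"
    have sneg: "s < 0" unfolding s_def using Np Q0 by (simp add: divide_pos_pos)
    have "s * Q \<ge> - N"
    proof -
      have "s * Q = - N * (Q / (Q + 1))" unfolding s_def by simp
      moreover have "Q / (Q + 1) \<le> 1" using Q0 by simp
      moreover have "N * (Q / (Q + 1)) \<le> N" using mult_left_mono[OF \<open>Q / (Q + 1) \<le> 1\<close>, of N] Np by simp
      ultimately show ?thesis by simp
    qed
    hence "2 * N + s * Q > 0" using Np by simp
    hence "s * (2 * N + s * Q) < 0" using sneg by (simp add: mult_neg_pos)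
    moreover have "s * (2 * N + s * Q) = 2 * s * N + s * s * Q" by (simp add: algebra_simps)
    ultimately show False using key[of s] by simp
  qed
  hence "\<forall>x\<in>I. (cmod (w x))\<^sup>2 = 0" unfolding N_def using finI by (subst (asm) sum_nonneg_eq_0_iff) auto
  hence "\<forall>x\<in>I. w x = 0" by simp
  hence "w = (\<lambda>_. 0)" using w by (intro vecs_eqI) (auto simp: vecs_def)
  thus ?thesis unfolding w_def .
qed

lemma adj_blockop: "adj (blockop S d m M) = blockop S d m (\<lambda>k b b'. cnj (M k b' b))"
  unfolding adj_def blockop_def by (intro ext) (auto split: prod.splits)

lemma sum_if_out: "(\<Sum>x\<in>A. if P then f x else 0) = (if P then sum f A else 0)"
  by simp

lemma blockrow:
  assumes k: "k \<in> S" and a: "a < d k" and j: "j < m k"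
  shows "(\<Sum>z\<in>I. D (k,a,j) z * blockop S d m M z (k,a,j)) = (\<Sum>j'<m k. D (k,a,j) (k,a,j') * M k j' j)"
proof -
  have x: "(k,a,j) \<in> I" using k a j unfolding Idx_def by simp
  have bv: "blockop S d m M (k',a',j') (k,a,j) = (if k' = k \<and> a' = a then M k' j' j else 0)"
    if "k' \<in> S" "a' < d k'" "j' < m k'" for k' a' j'
    using x that unfolding blockop_def Idx_def by auto
  have "(\<Sum>z\<in>I. D (k,a,j) z * blockop S d m M z (k,a,j))
     = (\<Sum>k'\<in>S. \<Sum>a'<d k'. \<Sum>j'<m k'. D (k,a,j) (k',a',j') * blockop S d m M (k',a',j') (k,a,j))"
    by (rule sum_Idx)
  also have "\<dots> = (\<Sum>k'\<in>S. \<Sum>a'<d k'. \<Sum>j'<m k'. D (k,a,j) (k',a',j') * (if k' = k \<and> a' = a then M k' j' j else 0))"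
    by (intro sum.cong refl) (simp add: bv)
  also have "\<dots> = (\<Sum>k'\<in>S. \<Sum>a'<d k'. if k' = k \<and> a' = a then (\<Sum>j'<m k'. D (k,a,j) (k',a',j') * M k' j' j) else 0)"
    by (intro sum.cong refl) auto
  also have "\<dots> = (\<Sum>k'\<in>S. if k' = k then (\<Sum>a'<d k'. if a' = a then (\<Sum>j'<m k'. D (k,a,j) (k',a',j') * M k' j' j) else 0) else 0)"
    by (intro sum.cong refl) auto
  also have "\<dots> = (\<Sum>j'<m k. D (k,a,j) (k,a,j') * M k j' j)"
    using k a finS by (simp add: sum.delta')
  finally show ?thesis .
qed

lemma blocktr: "tr (mul D (blockop S d m M)) = (\<Sum>k\<in>S. \<Sum>j<m k. \<Sum>j'<m k. M k j' j * (\<Sum>a<d k. D (k,a,j) (k,a,j')))"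
proof -
  have "tr (mul D (blockop S d m M)) = (\<Sum>x\<in>I. \<Sum>z\<in>I. D x z * blockop S d m M z x)"
    unfolding tr_def op_mult_def ..
  also have "\<dots> = (\<Sum>k\<in>S. \<Sum>a<d k. \<Sum>j<m k. \<Sum>j'<m k. D (k,a,j) (k,a,j') * M k j' j)"
    unfolding sum_Idx[of "\<lambda>x. \<Sum>z\<in>I. D x z * blockop S d m M z x"]
    by (intro sum.cong refl) (simp add: blockrow)
  also have "\<dots> = (\<Sum>k\<in>S. \<Sum>j<m k. \<Sum>j'<m k. \<Sum>a<d k. D (k,a,j) (k,a,j') * M k j' j)"
  proof (rule sum.cong[OF refl])
    fix k assume "k \<in> S"
    have "(\<Sum>a<d k. \<Sum>j<m k. \<Sum>j'<m k. D (k,a,j) (k,a,j') * M k j' j)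
        = (\<Sum>j<m k. \<Sum>a<d k. \<Sum>j'<m k. D (k,a,j) (k,a,j') * M k j' j)" by (rule sum.swap)
    also have "\<dots> = (\<Sum>j<m k. \<Sum>j'<m k. \<Sum>a<d k. D (k,a,j) (k,a,j') * M k j' j)"
      by (rule sum.cong[OF refl]) (rule sum.swap)
    finally show "(\<Sum>a<d k. \<Sum>j<m k. \<Sum>j'<m k. D (k,a,j) (k,a,j') * M k j' j)
        = (\<Sum>j<m k. \<Sum>j'<m k. \<Sum>a<d k. D (k,a,j) (k,a,j') * M k j' j)" .
  qed
  also have "\<dots> = (\<Sum>k\<in>S. \<Sum>j<m k. \<Sum>j'<m k. M k j' j * (\<Sum>a<d k. D (k,a,j) (k,a,j')))"
    by (simp add: sum_distrib_left mult.commute)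
  finally show ?thesis .
qed

definition PT0 :: "op \<Rightarrow> bool" where
  "PT0 D \<longleftrightarrow> (\<forall>k\<in>S. \<forall>j<m k. \<forall>j'<m k. (\<Sum>a<d k. D (k,a,j) (k,a,j')) = 0)"

lemma PT0_tr: "PT0 D \<Longrightarrow> tr (mul D (blockop S d m M)) = 0"
  unfolding blocktr PT0_def by simp

lemma tr_unit:
  assumes k: "k \<in> S" and j: "j < m k" and j': "j' < m k"
  shows "tr (mul D (blockop S d m (\<lambda>k0 b b'. if k0 = k \<and> b = j' \<and> b' = j then 1 else 0))) = (\<Sum>a<d k. D (k,a,j) (k,a,j'))"
proof -
  let ?P = "\<lambda>k. \<lambda>j. \<lambda>j'. (\<Sum>a<d k. D (k,a,j) (k,a,j'))"
  have pw: "\<And>k0 b b'. (if k0 = k \<and> b' = j' \<and> b = j then 1 else 0) * ?P k0 b b' = (if k0 = k then (if b = j then (if b' = j' then ?P k0 b b' else 0) else 0) else 0)"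
    by auto
  have "tr (mul D (blockop S d m (\<lambda>k0 b b'. if k0 = k \<and> b = j' \<and> b' = j then 1 else 0)))
    = (\<Sum>k0\<in>S. \<Sum>b<m k0. \<Sum>b'<m k0. (if k0 = k \<and> b' = j' \<and> b = j then 1 else 0) * ?P k0 b b')"
    unfolding blocktr ..
  also have "\<dots> = (\<Sum>k0\<in>S. if k0 = k then (\<Sum>b<m k0. if b = j then (\<Sum>b'<m k0. if b' = j' then ?P k0 b b' else 0) else 0) else 0)"
    by (simp only: pw sum_if_out)
  also have "\<dots> = ?P k j j'" using k j j' finS by (simp add: sum.delta')
  finally show ?thesis .
qed

lemma app_zero: "app A (\<lambda>_. 0) = (\<lambda>_. 0)"
  unfolding op_apply_def by simp

lemma app_comb2: "app (\<lambda>x y. a * A x y + b * B x y) r = (\<lambda>x. a * app A r x + b * app B r x)"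
  unfolding op_apply_def by (intro ext) (simp add: algebra_simps sum.distrib sum_distrib_left)

lemma app_diff: "app (\<lambda>x y. A x y - B x y) r = (\<lambda>x. app A r x - app B r x)"
  unfolding op_apply_def by (intro ext) (simp add: algebra_simps sum_subtractf)

lemma inn_comb2_r: "inn r (\<lambda>x. a * f x + b * g x) = a * inn r f + b * inn r g"
  unfolding inner_H_def by (simp add: algebra_simps sum.distrib sum_distrib_left)

lemma mul_lincomb_r: "mul D (\<lambda>x y. \<Sum>i\<in>J. c i * B i x y) = (\<lambda>x y. \<Sum>i\<in>J. c i * mul D (B i) x y)"
  unfolding op_mult_def
  apply (intro ext)
  apply (simp add: sum_distrib_left mult.left_commute)
  apply (rule sum.swap)
  done

lemma tr_lincomb: "tr (\<lambda>x y. \<Sum>i\<in>J. c i * C i x y) = (\<Sum>i\<in>J. c i * tr (C i))"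
  unfolding tr_def
  apply (simp add: sum_distrib_left)
  apply (rule sum.swap)
  done

lemma tr_XFX: "tr (mul D (mul (mul X F) (adj X))) = tr (mul (mul (mul (adj X) D) X) F)"
proof -
  have "tr (mul D (mul (mul X F) (adj X))) = tr (mul (mul D (mul X F)) (adj X))" by (simp add: mul_assoc)
  also have "\<dots> = tr (mul (adj X) (mul D (mul X F)))" by (rule tr_comm)
  also have "\<dots> = tr (mul (mul (mul (adj X) D) X) F)" by (simp add: mul_assoc)
  finally show ?thesis .
qed

lemma colP:
  assumes C: "C \<in> OPS" and P: "P \<in> OPS"
    and h: "\<And>y. y \<in> I \<Longrightarrow> app C (\<lambda>z. idop z y - P z y) = (\<lambda>_. 0)"
  shows "mul C P = C"
proof (rule ops_eqI[OF mul_ops[OF C P] C])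
  fix x y assume x: "x \<in> I" and y: "y \<in> I"
  have "app C (\<lambda>z. idop z y - P z y) x = mul C idop x y - mul C P x y"
    unfolding op_apply_def op_mult_def by (simp add: right_diff_distrib sum_subtractf)
  hence "mul C idop x y - mul C P x y = 0" using h[OF y] by (metis)
  thus "mul C P x y = C x y" using mul_idop[OF C] by simp
qed

lemma col_vecs: "P \<in> OPS \<Longrightarrow> y \<in> I \<Longrightarrow> (\<lambda>z. idop z y - P z y) \<in> VECS"
  by (subst vecs_def) (auto simp: opsD idop_def)

lemma app_col: "app X (\<lambda>z. idop z y - P z y) = (\<lambda>x. mul X idop x y - mul X P x y)"
  unfolding op_apply_def op_mult_def by (intro ext) (simp add: right_diff_distrib sum_subtractf)

lemma herm_proj:
  assumes Y: "Y \<in> OPS" and W0: "W0 \<in> OPS" and e: "mul Y (mul (adj Y) W0) = Y"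
  defines "P \<equiv> mul (adj Y) W0"
  shows "adj P = P" "mul Y P = Y" "mul P (adj Y) = adj Y" "P \<in> OPS"
proof -
  show YP: "mul Y P = Y" using e unfolding P_def .
  have "mul (adj P) (adj Y) = adj Y" using YP by (metis adj_mul)
  hence "mul (adj P) P = P" unfolding P_def by (simp add: mul_assoc[symmetric])
  hence "adj P = adj (mul (adj P) P)" by simp
  also have "\<dots> = mul (adj P) P" by (simp add: adj_mul)
  finally show hP: "adj P = P" using \<open>mul (adj P) P = P\<close> by simp
  have "mul P (adj Y) = adj (mul Y (adj P))" by (simp add: adj_mul)
  thus "mul P (adj Y) = adj Y" using YP hP by simp
  show "P \<in> OPS" unfolding P_def by (intro mul_ops adj_ops Y W0)
qed

lemma unitF_tr:
  assumes x: "x \<in> I" and y: "y \<in> I"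
  shows "tr (mul D (\<lambda>z w. if z = y \<and> w = x then 1 else 0)) = D x y"
proof -
  have "tr (mul D (\<lambda>z w. if z = y \<and> w = x then 1 else 0)) = (\<Sum>z\<in>I. \<Sum>w\<in>I. D z w * (if w = y \<and> z = x then 1 else 0))"
    unfolding tr_def op_mult_def by simp
  also have "\<dots> = (\<Sum>z\<in>I. if z = x then (\<Sum>w\<in>I. D z w * (if w = y then 1 else 0)) else 0)"
    by (intro sum.cong refl) (auto intro!: sum.cong)
  also have "\<dots> = D x y" using x y finI by (simp add: sum.delta' sum_delta_r)
  finally show ?thesis .
qed

lemma extremal_if:
  assumes X: "X \<in> OPS" and XiC: "Xi \<in> seedC S d m" and XiX: "Xi = mul (adj X) X"
    and WV: "WW X = op_span {mul (mul X (blockop S d m M)) (adj X) | M. True}"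
  shows "extremal_point (seedC S d m) Xi"
proof -
  have "A = B" if A: "A \<in> seedC S d m" and B: "B \<in> seedC S d m" and t: "0 < t" "t < 1"
    and eq: "Xi = (\<lambda>x y. complex_of_real t * A x y + complex_of_real (1 - t) * B x y)" for A B t
  proof -
    have pA: "psd S d m A" and pB: "psd S d m B" using A B unfolding seedC_def by auto
    have Ao: "A \<in> OPS" and Bo: "B \<in> OPS" using pA pB unfolding psd_def by auto
    have hA: "adj A = A" and hB: "adj B = B" using psd_herm pA pB by auto
    define D where "D = (\<lambda>x y. A x y - B x y)"
    have Do: "D \<in> OPS" unfolding D_def by (subst ops_def) (auto simp: opsD Ao Bo)
    have hD: "adj D = D"
    proof -
      have "adj D = (\<lambda>x y. adj A x y - adj B x y)" unfolding D_def adj_def by simp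
      thus ?thesis unfolding hA hB D_def .
    qed
    have PT: "PT0 D" unfolding PT0_def
    proof (intro ballI allI impI)
      fix k j j' assume k: "k \<in> S" and j: "j < m k" and j': "j' < m k"
      have "(\<Sum>a<d k. A (k,a,j) (k,a,j')) = (if j = j' then of_nat (d k) else 0)"
        using A k j j' unfolding seedC_def by blast
      moreover have "(\<Sum>a<d k. B (k,a,j) (k,a,j')) = (if j = j' then of_nat (d k) else 0)"
        using B k j j' unfolding seedC_def by blast
      ultimately show "(\<Sum>a<d k. D (k,a,j) (k,a,j')) = 0" unfolding D_def by (simp add: sum_subtractf)
    qed
    obtain W0 where W0: "W0 \<in> OPS" and e: "mul X (mul (adj X) W0) = X" using proj_exists[OF X] by blast
    define P where "P = mul (adj X) W0"
    have hP: "adj P = P" and XP: "mul X P = X" and Po: "P \<in> OPS"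
      using herm_proj[OF X W0 e] unfolding P_def by auto
    have ker: "app A r = (\<lambda>_. 0) \<and> app B r = (\<lambda>_. 0)" if r: "r \<in> VECS" and Xr: "app X r = (\<lambda>_. 0)" for r
    proof -
      define qa where "qa = inn r (app A r)"
      define qb where "qb = inn r (app B r)"
      have "inn r (app Xi r) = 0" unfolding XiX app_mul Xr app_zero inner_H_def by simp
      moreover have "inn r (app Xi r) = of_real t * qa + of_real (1 - t) * qb"
        unfolding eq app_comb2 inn_comb2_r qa_def qb_def ..
      ultimately have z: "of_real t * qa + of_real (1 - t) * qb = 0" by simp
      have ra: "Re qa \<ge> 0" "Im qa = 0" using pA r unfolding psd_def qa_def by auto
      have rb: "Re qb \<ge> 0" "Im qb = 0" using pB r unfolding psd_def qb_def by auto
      have "t * Re qa + (1 - t) * Re qb = 0" using arg_cong[OF z, of Re] by simp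
      moreover have "t * Re qa \<ge> 0" "(1 - t) * Re qb \<ge> 0" using ra rb t by auto
      ultimately have "t * Re qa = 0" "(1 - t) * Re qb = 0" by linarith+
      hence "Re qa = 0" "Re qb = 0" using t by auto
      hence "qa = 0" "qb = 0" using ra rb by (auto simp: complex_eq_iff)
      thus ?thesis using psd_null[OF pA r] psd_null[OF pB r] unfolding qa_def qb_def by auto
    qed
    have DP: "mul D P = D"
    proof (rule colP[OF Do Po])
      fix y assume y: "y \<in> I"
      have rv: "(\<lambda>z. idop z y - P z y) \<in> VECS" by (rule col_vecs[OF Po y])
      have "app X (\<lambda>z. idop z y - P z y) = (\<lambda>_. 0)"
        unfolding app_col XP mul_idop[OF X] by simp
      from ker[OF rv this] show "app D (\<lambda>z. idop z y - P z y) = (\<lambda>_. 0)"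
        unfolding D_def app_diff by simp
    qed
    have PD: "mul P D = D"
    proof -
      have "adj (mul D P) = mul P D" by (simp add: adj_mul hP hD)
      thus ?thesis using DP hD by simp
    qed
    have Padj: "P = mul (adj W0) X"
    proof -
      have "P = adj P" using hP by simp
      also have "\<dots> = mul (adj W0) X" unfolding P_def by (simp add: adj_mul)
      finally show ?thesis .
    qed
    define Dl where "Dl = mul (mul W0 D) (adj W0)"
    have Dfac: "D = mul (mul (adj X) Dl) X"
    proof -
      have "D = mul (mul P D) P" using PD DP by simp
      also have "\<dots> = mul (mul (mul (adj X) W0) D) (mul (adj W0) X)"
        using Padj unfolding P_def by (metis)
      also have "\<dots> = mul (mul (adj X) Dl) X" unfolding Dl_def by (simp add: mul_assoc)
      finally show ?thesis .
    qed
    have trD: "tr (mul D F) = 0" if F: "F \<in> OPS" for F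
    proof -
      have "mul (mul X F) (adj X) \<in> WW X" by (rule XFX_W[OF X F])
      hence "mul (mul X F) (adj X) \<in> op_span {mul (mul X (blockop S d m M)) (adj X) | M. True}"
        using WV by simp
      then obtain n :: nat and c :: "nat \<Rightarrow> complex" and Bs :: "nat \<Rightarrow> op" where Bs: "\<forall>i<n. Bs i \<in> {mul (mul X (blockop S d m M)) (adj X) | M. True}"
        and XF: "mul (mul X F) (adj X) = (\<lambda>x y. \<Sum>i<n. c i * Bs i x y)"
        unfolding op_span_def mem_Collect_eq by blast
      have "tr (mul D F) = tr (mul Dl (mul (mul X F) (adj X)))" unfolding tr_XFX Dfac[symmetric] ..
      also have "\<dots> = (\<Sum>i<n. c i * tr (mul Dl (Bs i)))" unfolding XF mul_lincomb_r tr_lincomb ..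
      also have "\<dots> = 0"
      proof (rule sum.neutral, rule ballI)
        fix i assume "i \<in> {..<n}"
        then obtain M where BM: "Bs i = mul (mul X (blockop S d m M)) (adj X)" using Bs by auto
        have "tr (mul Dl (Bs i)) = tr (mul Dl (mul (mul X (blockop S d m M)) (adj X)))" using BM by simp
        also have "\<dots> = tr (mul D (blockop S d m M))" unfolding tr_XFX Dfac[symmetric] ..
        also have "\<dots> = 0" by (rule PT0_tr[OF PT])
        finally show "c i * tr (mul Dl (Bs i)) = 0" by simp
      qed
      finally show ?thesis .
    qed
    have "D x y = 0" if x: "x \<in> I" and y: "y \<in> I" for x y
    proof -
      have Fo: "(\<lambda>z w. if z = y \<and> w = x then 1 else 0) \<in> OPS" using x y by (subst ops_def) auto
      show ?thesis using trD[OF Fo] unitF_tr[OF x y] by simp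
    qed
    moreover have zo: "(\<lambda>x y. 0::complex) \<in> OPS" by (simp add: ops_def)
    ultimately have D0: "D = (\<lambda>x y. 0)" by (intro ops_eqI[OF Do zo])
    have "A x y = B x y" for x y using fun_cong[OF fun_cong[OF D0, of x], of y] unfolding D_def by simp
    thus "A = B" by (intro ext)
  qed
  hence "\<forall>A\<in>seedC S d m. \<forall>B\<in>seedC S d m. \<forall>t::real. 0 < t \<and> t < 1 \<and>
        Xi = (\<lambda>x y. complex_of_real t * A x y + complex_of_real (1 - t) * B x y) \<longrightarrow> A = B"
    by (intro ballI allI impI) (elim conjE)
  thus ?thesis unfolding extremal_point_def using XiC by (intro conjI)
qed

lemma blockop_ops: "blockop S d m M \<in> OPS"
  unfolding blockop_def by (subst ops_def) (auto split: prod.splits)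

lemma V_sub_W:
  assumes X: "X \<in> OPS"
  shows "op_span {mul (mul X (blockop S d m M)) (adj X) | M. True} \<subseteq> WW X"
proof
  fix A assume "A \<in> op_span {mul (mul X (blockop S d m M)) (adj X) | M. True}"
  then obtain n :: nat and c :: "nat \<Rightarrow> complex" and Bs :: "nat \<Rightarrow> op" where
    Bs: "\<forall>i<n. Bs i \<in> {mul (mul X (blockop S d m M)) (adj X) | M. True}"
    and AB: "A = (\<lambda>x y. \<Sum>i<n. c i * Bs i x y)"
    unfolding op_span_def mem_Collect_eq by blast
  have "\<forall>i\<in>{..<n}. Bs i \<in> WW X" using Bs XFX_W[OF X blockop_ops] by auto
  from W_lincomb[OF X _ this] show "A \<in> WW X" unfolding AB by simp
qed

lemma app_lin_op: "app (\<lambda>x y. A x y + c * B x y) r = (\<lambda>x. app A r x + c * app B r x)"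
  unfolding op_apply_def by (intro ext) (simp add: algebra_simps sum.distrib sum_distrib_left)

lemma herm_real: "adj H = H \<Longrightarrow> Im (inn w (app H w)) = 0"
proof -
  assume h: "adj H = H"
  have "inn w (app H w) = inn w (app (adj H) w)" using h by simp
  also have "\<dots> = inn (app H w) w" by (rule inner_adj)
  also have "\<dots> = cnj (inn w (app H w))" by (rule inner_cnj)
  finally show ?thesis by (metis cnj.simps(2) neg_equal_zero)
qed

lemma quad_bound: "cmod (inn w (app H w)) \<le> (\<Sum>x\<in>I. \<Sum>y\<in>I. cmod (H x y)) * (\<Sum>x\<in>I. (cmod (w x))\<^sup>2)"
proof -
  define N where "N = (\<Sum>x\<in>I. (cmod (w x))\<^sup>2)"
  have sq: "(cmod (w x))\<^sup>2 \<le> N" if "x \<in> I" for x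
    unfolding N_def using that finI by (intro member_le_sum) auto
  have ab: "cmod (w x) * cmod (w y) \<le> N" if "x \<in> I" "y \<in> I" for x y
  proof -
    have "2 * (cmod (w x) * cmod (w y)) \<le> (cmod (w x))\<^sup>2 + (cmod (w y))\<^sup>2"
      using sum_squares_bound[of "cmod (w x)" "cmod (w y)"] by (simp add: power2_eq_square algebra_simps)
    thus ?thesis using sq[OF that(1)] sq[OF that(2)] by linarith
  qed
  have "cmod (inn w (app H w)) = cmod (\<Sum>x\<in>I. \<Sum>y\<in>I. cnj (w x) * (H x y * w y))"
    unfolding inner_H_def op_apply_def by (simp add: sum_distrib_left)
  also have "\<dots> \<le> (\<Sum>x\<in>I. cmod (\<Sum>y\<in>I. cnj (w x) * (H x y * w y)))" by (rule norm_sum)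
  also have "\<dots> \<le> (\<Sum>x\<in>I. \<Sum>y\<in>I. cmod (cnj (w x) * (H x y * w y)))" by (intro sum_mono norm_sum)
  also have "\<dots> \<le> (\<Sum>x\<in>I. \<Sum>y\<in>I. cmod (H x y) * N)"
  proof (intro sum_mono)
    fix x y assume "x \<in> I" "y \<in> I"
    hence "cmod (H x y) * (cmod (w x) * cmod (w y)) \<le> cmod (H x y) * N"
      using ab by (intro mult_left_mono) auto
    thus "cmod (cnj (w x) * (H x y * w y)) \<le> cmod (H x y) * N"
      by (simp add: norm_mult algebra_simps)
  qed
  also have "\<dots> = (\<Sum>x\<in>I. \<Sum>y\<in>I. cmod (H x y)) * N" by (simp add: sum_distrib_right)
  finally show ?thesis unfolding N_def .
qed

lemma perturb:
  assumes X: "X \<in> OPS" and XiC: "Xi \<in> seedC S d m" and XiX: "Xi = mul (adj X) X"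
    and H: "H \<in> OPS" and hH: "adj H = H" and PT: "PT0 (mul (mul (adj X) H) X)"
    and nz: "mul (mul (adj X) H) X \<noteq> (\<lambda>x y. 0)"
  shows "\<not> extremal_point (seedC S d m) Xi"
proof
  assume ex: "extremal_point (seedC S d m) Xi"
  define E where "E = mul (mul (adj X) H) X"
  define K where "K = (\<Sum>x\<in>I. \<Sum>y\<in>I. cmod (H x y))"
  have K0: "K \<ge> 0" unfolding K_def by (intro sum_nonneg) auto
  define e where "e = 1 / (K + 1)"
  have e0: "e > 0" unfolding e_def using K0 by simp
  have eK: "e * K \<le> 1" unfolding e_def using K0 by (simp add: field_simps)
  have Eo: "E \<in> OPS" unfolding E_def by (intro mul_ops adj_ops X H)
  have Xio: "Xi \<in> OPS" using XiC unfolding seedC_def psd_def by blast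
  define Xs where "Xs s = (\<lambda>x y. Xi x y + complex_of_real s * E x y)" for s :: real
  have inC: "Xs s \<in> seedC S d m" if s: "\<bar>s\<bar> \<le> e" for s
  proof -
    have o: "Xs s \<in> OPS" unfolding Xs_def by (subst ops_def) (auto simp: opsD Xio Eo)
    have q: "Im (inn v (app (Xs s) v)) = 0 \<and> Re (inn v (app (Xs s) v)) \<ge> 0" if v: "v \<in> VECS" for v
    proof -
      define w where "w = app X v"
      define N where "N = (\<Sum>x\<in>I. (cmod (w x))\<^sup>2)"
      define z where "z = inn w (app H w)"
      have "inn v (app (Xs s) v) = inn v (app Xi v) + of_real s * inn v (app E v)"
        unfolding Xs_def app_lin_op inner_H_def by (simp add: algebra_simps sum.distrib sum_distrib_left)
      also have "inn v (app Xi v) = inn w w" unfolding XiX app_mul inner_adj w_def ..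
      also have "inn v (app E v) = z" unfolding E_def app_mul inner_adj z_def w_def ..
      also have "inn w w = of_real N" unfolding N_def inner_H_def using ip_self[of I w] unfolding ip_def .
      finally have eq: "inn v (app (Xs s) v) = of_real N + of_real s * z" .
      have Imz: "Im z = 0" unfolding z_def by (rule herm_real[OF hH])
      have zb: "cmod z \<le> K * N" unfolding z_def K_def N_def by (rule quad_bound)
      have "\<bar>s * Re z\<bar> \<le> e * (K * N)"
      proof -
        have "\<bar>s * Re z\<bar> = \<bar>s\<bar> * \<bar>Re z\<bar>" by (simp add: abs_mult)
        also have "\<dots> \<le> e * (K * N)"
          using s zb abs_Re_le_cmod[of z] by (intro mult_mono) auto
        finally show ?thesis .
      qed
      moreover have "e * (K * N) \<le> N"
      proof -
        have "N \<ge> 0" unfolding N_def by (intro sum_nonneg) auto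
        hence "(e * K) * N \<le> 1 * N" using eK by (intro mult_right_mono) auto
        thus ?thesis by (simp add: mult.assoc)
      qed
      ultimately have "N + s * Re z \<ge> 0" by linarith
      thus ?thesis unfolding eq using Imz by simp
    qed
    have pt: "(\<Sum>a<d k. Xs s (k, a, j) (k, a, j')) = (if j = j' then of_nat (d k) else 0)"
      if k: "k \<in> S" and j: "j < m k" and j': "j' < m k" for k j j'
    proof -
      have "(\<Sum>a<d k. Xs s (k, a, j) (k, a, j')) = (\<Sum>a<d k. Xi (k, a, j) (k, a, j')) + of_real s * (\<Sum>a<d k. E (k, a, j) (k, a, j'))"
        unfolding Xs_def by (simp add: sum.distrib sum_distrib_left)
      also have "(\<Sum>a<d k. E (k, a, j) (k, a, j')) = 0" using PT k j j' unfolding PT0_def E_def by blast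
      also have "(\<Sum>a<d k. Xi (k, a, j) (k, a, j')) = (if j = j' then of_nat (d k) else 0)"
        using XiC k j j' unfolding seedC_def by blast
      finally show ?thesis by simp
    qed
    show ?thesis unfolding seedC_def psd_def using o q pt by blast
  qed
  have "Xi = (\<lambda>x y. complex_of_real (1/2) * Xs e x y + complex_of_real (1 - 1/2) * Xs (-e) x y)"
    unfolding Xs_def by (intro ext) (simp add: algebra_simps)
  hence "Xs e = Xs (-e)" using ex inC[of e] inC[of "-e"] e0 unfolding extremal_point_def
    by (metis (no_types, lifting) abs_minus_cancel abs_of_pos dual_order.refl field_sum_of_halves half_gt_zero_iff less_add_same_cancel1 zero_less_one)
  hence "E x y = 0" for x y
    using fun_cong[OF fun_cong[OF \<open>Xs e = Xs (-e)\<close>, of x], of y] e0 unfolding Xs_def by simp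
  hence "E = (\<lambda>x y. 0)" by (intro ext)
  thus False using nz unfolding E_def by simp
qed

lemma mul_comb_mid: "mul (mul Lm (\<lambda>x y. a * A x y + b * B x y)) Rm
   = (\<lambda>x y. a * mul (mul Lm A) Rm x y + b * mul (mul Lm B) Rm x y)"
  unfolding op_mult_def
  by (intro ext) (simp add: algebra_simps sum.distrib sum_distrib_left sum_distrib_right)

lemma adj_sandwich: "mul (mul (adj X) (adj D)) X = adj (mul (mul (adj X) D) X)"
  by (simp add: adj_mul mul_assoc)

lemma zero_mul: "mul (\<lambda>x y. 0) B = (\<lambda>x y. 0)" unfolding op_mult_def by simp
lemma mul_zero: "mul A (\<lambda>x y. 0) = (\<lambda>x y. 0)" unfolding op_mult_def by simp

lemma extremal_only:
  assumes X: "X \<in> OPS" and XiC: "Xi \<in> seedC S d m" and XiX: "Xi = mul (adj X) X"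
    and ex: "extremal_point (seedC S d m) Xi"
  shows "WW X = op_span {mul (mul X (blockop S d m M)) (adj X) | M. True}"
proof (rule ccontr)
  let ?V = "op_span {mul (mul X (blockop S d m M)) (adj X) | M. True}"
  assume ne: "WW X \<noteq> ?V"
  then obtain A0 where A0W: "A0 \<in> WW X" and A0V: "A0 \<notin> ?V" using V_sub_W[OF X] by blast
  define J where "J = Sigma S (\<lambda>k. {..<m k} \<times> {..<m k})"
  have fJ: "finite J" unfolding J_def using finS by auto
  define U where "U i = (\<lambda>k0 b b'. if k0 = fst i \<and> b = snd (snd i) \<and> b' = fst (snd i) then (1::complex) else 0)"
    for i :: "nat \<times> nat \<times> nat"
  define Hg where "Hg i = mul (mul X (blockop S d m (\<lambda>k b b'. cnj (U i k b' b)))) (adj X)" for i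
  have Hg_adj: "adj (Hg i) = mul (mul X (blockop S d m (U i))) (adj X)" for i
    unfolding Hg_def by (simp add: adj_mul adj_blockop mul_assoc)
  have HgW: "Hg i \<in> WW X" for i unfolding Hg_def by (rule XFX_W[OF X blockop_ops])
  define G where "G i = (\<lambda>p. Hg i (fst p) (snd p))" for i
  obtain c where c: "\<forall>A. \<forall>i\<in>J. ip (I \<times> I) (G i) (\<lambda>p. A p - (\<Sum>l\<in>J. c A l * G l p)) = 0"
    using GS[of "I \<times> I" J G] finI fJ by blast
  define cc where "cc = c (\<lambda>p. A0 (fst p) (snd p))"
  define D0 where "D0 = (\<lambda>x y. A0 x y - (\<Sum>l\<in>J. cc l * Hg l x y))"
  have orth: "tr (mul D0 (mul (mul X (blockop S d m (U i))) (adj X))) = 0" if i: "i \<in> J" for i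
  proof -
    have "ip (I \<times> I) (G i) (\<lambda>p. D0 (fst p) (snd p)) = 0"
      using c i unfolding cc_def D0_def G_def by auto
    moreover have "ip (I \<times> I) (G i) (\<lambda>p. D0 (fst p) (snd p)) = tr (mul D0 (adj (Hg i)))"
    proof -
      have "ip (I \<times> I) (G i) (\<lambda>p. D0 (fst p) (snd p)) = (\<Sum>(x,y)\<in>I \<times> I. cnj (Hg i x y) * D0 x y)"
        unfolding ip_def G_def by (simp add: case_prod_beta)
      also have "\<dots> = (\<Sum>x\<in>I. \<Sum>y\<in>I. cnj (Hg i x y) * D0 x y)" by (rule sum.cartesian_product[symmetric])
      also have "\<dots> = tr (mul D0 (adj (Hg i)))" unfolding tr_def op_mult_def adj_def
        by (simp add: mult.commute)
      finally show ?thesis .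
    qed
    ultimately show ?thesis unfolding Hg_adj by simp
  qed
  have D0W: "D0 \<in> WW X"
    unfolding D0_def using W_diff[OF X A0W W_lincomb[OF X fJ, of Hg cc]] HgW by simp
  have D0o: "D0 \<in> OPS" using D0W unfolding ops_on_range_def by blast
  have D0nz: "D0 \<noteq> (\<lambda>x y. 0)"
  proof
    assume "D0 = (\<lambda>x y. 0)"
    hence A0eq: "A0 = (\<lambda>x y. \<Sum>l\<in>J. cc l * Hg l x y)"
      unfolding D0_def by (metis (no_types, lifting) eq_iff_diff_eq_0)
    obtain h where h: "bij_betw h {0..<card J} J" using ex_bij_betw_nat_finite[OF fJ] by blast
    have "(\<Sum>l\<in>J. cc l * Hg l x y) = (\<Sum>i<card J. cc (h i) * Hg (h i) x y)" for x y
      using sum.reindex_bij_betw[OF h, of "\<lambda>l. cc l * Hg l x y"] by (simp add: lessThan_atLeast0)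
    hence "A0 = (\<lambda>x y. \<Sum>i<card J. cc (h i) * Hg (h i) x y)" unfolding A0eq by simp
    moreover have "\<forall>i<card J. Hg (h i) \<in> {mul (mul X (blockop S d m M)) (adj X) | M. True}"
      unfolding Hg_def by blast
    ultimately have "A0 \<in> ?V" unfolding op_span_def
      by (intro CollectI exI[of _ "card J"] exI[of _ "\<lambda>i. cc (h i)"] exI[of _ "\<lambda>i. Hg (h i)"] conjI)
    thus False using A0V by simp
  qed
  define E0 where "E0 = mul (mul (adj X) D0) X"
  obtain W1 where W1: "W1 \<in> OPS" and e1: "mul (adj X) (mul (adj (adj X)) W1) = adj X"
    using proj_exists[OF adj_ops[OF X]] by blast
  define Q where "Q = mul X W1"
  have hQ: "adj Q = Q" and XQ: "mul (adj X) Q = adj X" and QX: "mul Q X = X" and Qo: "Q \<in> OPS"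
    using herm_proj[OF adj_ops[OF X] W1 e1] unfolding Q_def by auto
  have D0Q: "mul D0 Q = D0"
  proof (rule colP[OF D0o Qo])
    fix y assume y: "y \<in> I"
    have rv: "(\<lambda>z. idop z y - Q z y) \<in> VECS" by (rule col_vecs[OF Qo y])
    have ax: "app (adj X) (\<lambda>z. idop z y - Q z y) = (\<lambda>_. 0)"
      unfolding app_col XQ mul_idop[OF adj_ops[OF X]] by simp
    have "\<forall>w\<in>Rng S d m X. inn w (\<lambda>z. idop z y - Q z y) = 0"
    proof
      fix w assume "w \<in> Rng S d m X"
      then obtain u where "w = app X u" unfolding Rng_def by blast
      thus "inn w (\<lambda>z. idop z y - Q z y) = 0"
        using inner_adj[of u X "\<lambda>z. idop z y - Q z y"] ax by (simp add: inner_H_def)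
    qed
    thus "app D0 (\<lambda>z. idop z y - Q z y) = (\<lambda>_. 0)" using D0W rv unfolding ops_on_range_def by blast
  qed
  have QD0: "mul Q D0 = D0"
  proof (rule ops_eqI[OF mul_ops[OF Qo D0o] D0o])
    fix x y assume x: "x \<in> I" and y: "y \<in> I"
    have "app D0 (unitv y) \<in> Rng S d m X" using D0W unitv_vecs[OF y] unfolding ops_on_range_def by blast
    then obtain u where u: "app D0 (unitv y) = app X u" unfolding Rng_def by blast
    have "mul Q D0 x y = app (mul Q D0) (unitv y) x" using app_unitv[OF y] by simp
    also have "\<dots> = app Q (app X u) x" unfolding app_mul u ..
    also have "\<dots> = app X u x" unfolding app_mul[symmetric] QX ..
    also have "\<dots> = D0 x y" unfolding u[symmetric] using app_unitv[OF y] by simp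
    finally show "mul Q D0 x y = D0 x y" .
  qed
  have E0nz: "E0 \<noteq> (\<lambda>x y. 0)"
  proof
    assume E0z: "E0 = (\<lambda>x y. 0)"
    have Qa: "Q = mul (adj W1) (adj X)" using hQ unfolding Q_def by (metis adj_mul)
    have "D0 = mul (mul Q D0) Q" using QD0 D0Q by simp
    also have "\<dots> = mul (adj W1) (mul E0 W1)"
      unfolding E0_def by (subst (1) Qa) (simp add: mul_assoc Q_def)
    also have "\<dots> = (\<lambda>x y. 0)" unfolding E0z zero_mul mul_zero ..
    finally show False using D0nz by simp
  qed
  have PTE: "PT0 E0" unfolding PT0_def
  proof (intro ballI allI impI)
    fix k j j' assume k: "k \<in> S" and j: "j < m k" and j': "j' < m k"
    have i: "(k, j, j') \<in> J" unfolding J_def using k j j' by auto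
    have Ui: "U (k, j, j') = (\<lambda>k0 b b'. if k0 = k \<and> b = j' \<and> b' = j then 1 else 0)" unfolding U_def by simp
    have "(\<Sum>a<d k. E0 (k,a,j) (k,a,j')) = tr (mul E0 (blockop S d m (U (k,j,j'))))"
      unfolding Ui using tr_unit[OF k j j'] by simp
    also have "\<dots> = tr (mul D0 (mul (mul X (blockop S d m (U (k,j,j')))) (adj X)))"
      unfolding E0_def tr_XFX ..
    also have "\<dots> = 0" by (rule orth[OF i])
    finally show "(\<Sum>a<d k. E0 (k,a,j) (k,a,j')) = 0" .
  qed
  define Hw where "Hw w = (\<lambda>x y. w * D0 x y + cnj w * adj D0 x y)" for w
  have Hwo: "Hw w \<in> OPS" for w unfolding Hw_def by (subst ops_def) (auto simp: opsD D0o adj_def)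
  have hHw: "adj (Hw w) = Hw w" for w unfolding Hw_def adj_def by (intro ext) (simp add: algebra_simps)
  have EHw: "mul (mul (adj X) (Hw w)) X = (\<lambda>x y. w * E0 x y + cnj w * adj E0 x y)" for w
    unfolding Hw_def mul_comb_mid adj_sandwich E0_def ..
  have PTw: "PT0 (mul (mul (adj X) (Hw w)) X)" for w
    unfolding PT0_def EHw
  proof (intro ballI allI impI)
    fix k j j' assume k: "k \<in> S" and j: "j < m k" and j': "j' < m k"
    have z1: "(\<Sum>a<d k. E0 (k,a,j) (k,a,j')) = 0" using PTE k j j' unfolding PT0_def by blast
    have z2: "(\<Sum>a<d k. E0 (k,a,j') (k,a,j)) = 0" using PTE k j j' unfolding PT0_def by blast
    have "(\<Sum>a<d k. adj E0 (k,a,j) (k,a,j')) = cnj (\<Sum>a<d k. E0 (k,a,j') (k,a,j))"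
      unfolding adj_def by simp
    thus "(\<Sum>a<d k. w * E0 (k,a,j) (k,a,j') + cnj w * adj E0 (k,a,j) (k,a,j')) = 0"
      using z1 z2 by (simp add: sum.distrib sum_distrib_left[symmetric])
  qed
  obtain x y where xy: "E0 x y \<noteq> 0" using E0nz by (metis ext)
  have "\<exists>w. mul (mul (adj X) (Hw w)) X \<noteq> (\<lambda>x y. 0)"
  proof (rule ccontr)
    assume "\<not> ?thesis"
    hence z: "\<And>w. w * E0 x y + cnj w * adj E0 x y = 0" unfolding EHw by (metis fun_cong)
    have "E0 x y + adj E0 x y = 0" using z[of 1] by simp
    moreover have "\<i> * E0 x y - \<i> * adj E0 x y = 0" using z[of "\<i>"] by simp
    ultimately have "E0 x y = 0" by (simp add: algebra_simps)
    thus False using xy by simp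
  qed
  then obtain w where wnz: "mul (mul (adj X) (Hw w)) X \<noteq> (\<lambda>x y. 0)" by blast
  have "\<not> extremal_point (seedC S d m) Xi"
    by (rule perturb[OF X XiC XiX Hwo hHw PTw wnz])
  thus False using ex by simp
qed

end

theorem theorem2:
  fixes S :: "nat set" and d m :: "nat \<Rightarrow> nat" and Xi X :: op
  assumes "finite S"
    and "\<forall>k\<in>S. 0 < d k \<and> 0 < m k"
    and "Xi \<in> seedC S d m"
    and "X \<in> ops S d m"
    and "Xi = op_mult S d m (adj X) X"
  shows "extremal_point (seedC S d m) Xi \<longleftrightarrow>
    ops_on_range S d m X =
      op_span {op_mult S d m (op_mult S d m X (blockop S d m M)) (adj X) | M. True}"
proof -
  interpret L S d m by unfold_locales (rule assms(1))
  show ?thesis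
    using extremal_if[OF assms(4) assms(3) assms(5)] extremal_only[OF assms(4) assms(3) assms(5)]
    by blast
qed

end
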